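(* Let $\Gamma$ be a Coxeter graph of spherical type or of affine type, and let $\mathcal X\subset\Phi[\Gamma]$ be free of infinity with respect to $\hat M$, i.e. $\hat m_{\beta,\gamma}\neq\infty$ for all $\beta,\gamma\in\mathcal X$. Then $\mathcal X$ is finite, the full subgraph $\hat\Gamma_{\mathcal X}$ of $\hat\Gamma$ spanned by $\mathcal X$ is of spherical type or of affine type, and $n_{\mathrm{sph}}(A[\hat\Gamma_{\mathcal X}])\le n_{\mathrm{sph}}(A[\Gamma])$.
   Context: A Coxeter matrix on a countable set $S$ is a symmetric matrix $M=(m_{s,t})_{s,t\in S}$ with entries in $\mathbb{N}\cup\{\infty\}$ with $m_{s,s}=1$ and $m_{s,t}=m_{t,s}\ge2$ for $s\ne t$; it is encoded by a Coxeter graph $\Gamma$ with vertex set $S$. $W[\Gamma]=\langle S\mid s^2=1,\ (st)^{m_{s,t}}=1 \text{ for } m_{s,t}\ne\infty\rangle$ is the Coxeter group and $A[\Gamma]$ the Artin group. Let $V$ be the real vector space with basis $\{\alpha_s\mid s\in S\}$ and canonical symmetric bilinear form $\langle\alpha_s,\alpha_t\rangle=-2\cos(\pi/m_{s,t})$ if $m_{s,t}\neq\infty$ and $-2$ otherwise; $W[\Gamma]$ acts on $V$ by $s(v)=v-\langle v,\alpha_s\rangle\alpha_s$, and $\Phi[\Gamma]=\{w(\alpha_s)\mid w\in W[\Gamma],s\in S\}$ is the root system. Define the Coxeter matrix $\hat M=(\hat m_{\beta,\gamma})_{\beta,\gamma\in\Phi[\Gamma]}$ by $\hat m_{\beta,\beta}=1$,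 and for $\beta\neq\gamma$: $\hat m_{\beta,\gamma}=m_{s,t}$ if there exist $w\in W[\Gamma]$, $s,t\in S$ with $\beta=w(\alpha_s)$, $\gamma=w(\alpha_t)$, $m_{s,t}\neq\infty$ (independent of choices), and $\hat m_{\beta,\gamma}=\infty$ otherwise; $\hat\Gamma$ is its Coxeter graph. A finite Coxeter graph is of spherical type if its Coxeter group is finite (equivalently its canonical bilinear form is positive definite), and of affine type if its canonical bilinear form is positive semi-definite but not positive definite. For a Coxeter graph $\Gamma$ with vertex set $S$ and $X\subset S$, $\Gamma_X$ is the full subgraph spanned by $X$; the spherical dimension $n_{\mathrm{sph}}(A[\Gamma])$ is the maximum of $|X|$ over all finite $X\subset S$ with $\Gamma_X$ of spherical type. *)

theory Defs
  imports Complex_Main "HOL-Library.Extended_Nat" "HOL-Library.Countable_Set"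
begin

text \<open>A Coxeter graph is given by a vertex set S and a matrix M on S with entries in
  nat extended by infinity.  Only the values of M on S x S matter.\<close>

definition coxeter_matrix :: "'v set \<Rightarrow> ('v \<Rightarrow> 'v \<Rightarrow> enat) \<Rightarrow> bool" where
  "coxeter_matrix S M \<longleftrightarrow>
     (\<forall>s\<in>S. M s s = 1) \<and>
     (\<forall>s\<in>S. \<forall>t\<in>S. s \<noteq> t \<longrightarrow> M s t = M t s \<and> M s t \<ge> 2)"

definition bf_coeff :: "('v \<Rightarrow> 'v \<Rightarrow> enat) \<Rightarrow> 'v \<Rightarrow> 'v \<Rightarrow> real" where
  "bf_coeff M s t = (case M s t of enat n \<Rightarrow> - 2 * cos (pi / real n) | \<infinity> \<Rightarrow> - 2)"

text \<open>Vectors of V (real vector space with basis alpha_s, s in S) are represented as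
  functions 'v => real (coordinates), vanishing outside S; the form only reads S.\<close>
definition bform :: "'v set \<Rightarrow> ('v \<Rightarrow> 'v \<Rightarrow> enat) \<Rightarrow> ('v \<Rightarrow> real) \<Rightarrow> ('v \<Rightarrow> real) \<Rightarrow> real" where
  "bform S M u v = (\<Sum>s\<in>S. \<Sum>t\<in>S. u s * v t * bf_coeff M s t)"

definition simple_root :: "'v \<Rightarrow> ('v \<Rightarrow> real)" where
  "simple_root s = (\<lambda>x. if x = s then 1 else 0)"

definition refl :: "'v set \<Rightarrow> ('v \<Rightarrow> 'v \<Rightarrow> enat) \<Rightarrow> 'v \<Rightarrow> ('v \<Rightarrow> real) \<Rightarrow> ('v \<Rightarrow> real)" where
  "refl S M s v = (\<lambda>x. v x - bform S M v (simple_root s) * simple_root s x)"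

text \<open>The Coxeter group W acting on V: the group of linear maps generated by the
  reflections s (each s is an involution, so products of generators give all of W).\<close>
inductive_set weyl :: "'v set \<Rightarrow> ('v \<Rightarrow> 'v \<Rightarrow> enat) \<Rightarrow> (('v \<Rightarrow> real) \<Rightarrow> ('v \<Rightarrow> real)) set"
  for S M where
  weyl_id: "id \<in> weyl S M"
| weyl_step: "w \<in> weyl S M \<Longrightarrow> s \<in> S \<Longrightarrow> refl S M s \<circ> w \<in> weyl S M"

definition roots :: "'v set \<Rightarrow> ('v \<Rightarrow> 'v \<Rightarrow> enat) \<Rightarrow> ('v \<Rightarrow> real) set" where
  "roots S M = {w (simple_root s) | w s. w \<in> weyl S M \<and> s \<in> S}"

definition hatM :: "'v set \<Rightarrow> ('v \<Rightarrow> 'v \<Rightarrow> enat) \<Rightarrow> ('v \<Rightarrow> real) \<Rightarrow> ('v \<Rightarrow> real) \<Rightarrow> enat" where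
  "hatM S M \<beta> \<gamma> =
    (if \<beta> = \<gamma> then 1
     else if (\<exists>w s t. w \<in> weyl S M \<and> s \<in> S \<and> t \<in> S \<and> \<beta> = w (simple_root s) \<and>
                      \<gamma> = w (simple_root t) \<and> M s t \<noteq> \<infinity>)
     then (let p = (SOME p. \<exists>w. w \<in> weyl S M \<and> fst p \<in> S \<and> snd p \<in> S \<and>
                      \<beta> = w (simple_root (fst p)) \<and> \<gamma> = w (simple_root (snd p)) \<and>
                      M (fst p) (snd p) \<noteq> \<infinity>) in M (fst p) (snd p))
     else \<infinity>)"

definition spherical_type :: "'v set \<Rightarrow> ('v \<Rightarrow> 'v \<Rightarrow> enat) \<Rightarrow> bool" where
  "spherical_type S M \<longleftrightarrow> finite S \<and>
     (\<forall>x::'v \<Rightarrow> real. (\<exists>s\<in>S. x s \<noteq> 0) \<longrightarrow> bform S M x x > 0)"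

definition affine_type :: "'v set \<Rightarrow> ('v \<Rightarrow> 'v \<Rightarrow> enat) \<Rightarrow> bool" where
  "affine_type S M \<longleftrightarrow> finite S \<and>
     (\<forall>x::'v \<Rightarrow> real. bform S M x x \<ge> 0) \<and>
     \<not> (\<forall>x::'v \<Rightarrow> real. (\<exists>s\<in>S. x s \<noteq> 0) \<longrightarrow> bform S M x x > 0)"

text \<open>Spherical dimension of A[Gamma]; the full subgraph Gamma_X is (X, M restricted).\<close>
definition nsph :: "'v set \<Rightarrow> ('v \<Rightarrow> 'v \<Rightarrow> enat) \<Rightarrow> nat" where
  "nsph S M = Max {card X | X. X \<subseteq> S \<and> finite X \<and> spherical_type X M}"

end

theory Submission imports Defs "HOL-Library.Function_Algebras" begin

instantiation "fun" :: (type, real_vector) real_vector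
begin
definition scaleR_fun :: "real \<Rightarrow> ('a \<Rightarrow> 'b) \<Rightarrow> 'a \<Rightarrow> 'b" where
  "scaleR_fun r f = (\<lambda>x. r *\<^sub>R f x)"
instance by standard (auto simp: scaleR_fun_def fun_eq_iff plus_fun_def algebra_simps)
end

lemma scaleR_fun_apply[simp]: "(r *\<^sub>R f) x = r *\<^sub>R f x"
  by (simp add: scaleR_fun_def)

lemma sum_fun_apply: "(sum f A) x = (\<Sum>a\<in>A. f a x)"
  by (induction A rule: infinite_finite_induct) (auto simp: plus_fun_def)

lemma bform_add2: "bform S M u (v + w) = bform S M u v + bform S M u w"
  by (simp add: bform_def algebra_simps sum.distrib)
lemma bform_add1: "bform S M (u + v) w = bform S M u w + bform S M v w"
  by (simp add: bform_def algebra_simps sum.distrib)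
lemma bform_scale2: "bform S M u (c *\<^sub>R v) = c * bform S M u v"
  by (simp add: bform_def sum_distrib_left algebra_simps)
lemma bform_scale1: "bform S M (c *\<^sub>R u) v = c * bform S M u v"
  by (simp add: bform_def sum_distrib_left algebra_simps)
lemma lin2: "linear (bform S M u)"
  by (rule linearI) (simp_all add: bform_add2 bform_scale2)
lemma lin1: "linear (\<lambda>u. bform S M u v)"
  by (rule linearI) (simp_all add: bform_add1 bform_scale1)

lemma bform_simple1: "finite S \<Longrightarrow> s \<in> S \<Longrightarrow> bform S M (simple_root s) v = (\<Sum>t\<in>S. v t * bf_coeff M s t)"
proof -
  assume "finite S" "s \<in> S"
  have "\<And>sa. (\<Sum>t\<in>S. simple_root s sa * v t * bf_coeff M sa t) = (if sa = s then (\<Sum>t\<in>S. v t * bf_coeff M s t) else 0)"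
    by (simp add: simple_root_def)
  then show ?thesis using \<open>finite S\<close> \<open>s \<in> S\<close> by (simp add: bform_def)
qed

lemma bform_ss: "finite S \<Longrightarrow> s \<in> S \<Longrightarrow> t \<in> S \<Longrightarrow> bform S M (simple_root s) (simple_root t) = bf_coeff M s t"
proof -
  assume a: "finite S" "s \<in> S" "t \<in> S"
  have "\<And>t'. simple_root t t' * bf_coeff M s t' = (if t' = t then bf_coeff M s t else 0)"
    by (simp add: simple_root_def)
  then show ?thesis using a by (simp add: bform_simple1)
qed

lemma bf_one: "M s s = 1 \<Longrightarrow> bf_coeff M s s = 2"
  by (simp add: bf_coeff_def one_enat_def)

lemma refl_eq: "refl S M s v = v - bform S M v (simple_root s) *\<^sub>R simple_root s"
  by (simp add: refl_def fun_eq_iff scaleR_fun_apply)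

lemma lin_span0: "linear (f :: ('a \<Rightarrow> real) \<Rightarrow> real) \<Longrightarrow> (\<And>a. a \<in> A \<Longrightarrow> f a = 0) \<Longrightarrow> x \<in> span A \<Longrightarrow> f x = 0"
  using linear_eq_0_on_span by blast

lemma card_le_span:
  fixes g :: "'b \<Rightarrow> 'c::real_vector"
  assumes Y: "finite Y" and T: "finite T" and sp: "g ` Y \<subseteq> span T"
    and sc: "\<And>c. (\<Sum>y\<in>Y. c y *\<^sub>R g y) = 0 \<Longrightarrow> \<forall>y\<in>Y. c y = 0"
  shows "card Y \<le> card T"
proof -
  have inj: "inj_on g Y"
  proof (rule inj_onI, rule ccontr)
    fix a b assume ab: "a \<in> Y" "b \<in> Y" "g a = g b" "a \<noteq> b"
    define c where "c = (\<lambda>y. (if y = a then 1 else 0) - (if y = b then 1 else (0::real)))"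
    have "(\<Sum>y\<in>Y. c y *\<^sub>R g y) = (\<Sum>y\<in>Y. (if y = a then g y else 0)) - (\<Sum>y\<in>Y. (if y = b then g y else 0))"
    proof -
      have "\<And>y. c y *\<^sub>R g y = (if y = a then g y else 0) - (if y = b then g y else 0)"
        using ab(4) by (auto simp: c_def)
      then show ?thesis by (simp add: sum_subtractf)
    qed
    also have "\<dots> = 0" using ab Y by simp
    finally have "c a = 0" using sc ab(1) by blast
    then show False using ab(4) by (simp add: c_def)
  qed
  have "independent (g ` Y)"
  proof (rule independent_if_scalars_zero)
    show "finite (g ` Y)" using Y by simp
  next
    fix f x assume s0: "(\<Sum>x\<in>g ` Y. f x *\<^sub>R x) = 0" and x: "x \<in> g ` Y"
    have "(\<Sum>y\<in>Y. f (g y) *\<^sub>R g y) = 0" using s0 by (simp add: sum.reindex[OF inj])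
    then show "f x = 0" using sc[of "\<lambda>y. f (g y)"] x by auto
  qed
  then have "card (g ` Y) \<le> card T" using independent_span_bound[OF T _ sp] by blast
  then show ?thesis using card_image[OF inj] by simp
qed

lemma supp_span:
  assumes "finite A" "\<forall>q. q \<notin> A \<longrightarrow> h q = 0"
  shows "h \<in> span (simple_root ` A)"
proof -
  have "h = (\<Sum>t\<in>A. h t *\<^sub>R simple_root t)"
  proof
    fix q
    have "(\<Sum>t\<in>A. h t *\<^sub>R simple_root t) q = (\<Sum>t\<in>A. if q = t then h t else 0)"
      by (simp add: sum_fun_apply simple_root_def if_distrib cong: if_cong)
    also have "\<dots> = h q" using assms by (simp add: sum.delta)
    finally show "h q = (\<Sum>t\<in>A. h t *\<^sub>R simple_root t) q" by simp
  qed
  also have "\<dots> \<in> span (simple_root ` A)" by (intro span_sum span_scale span_base) auto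
  finally show ?thesis .
qed

lemma bform_restrict:
  assumes "A \<subseteq> S" "finite S"
  shows "bform S M (\<lambda>q. if q \<in> A then x q else 0) (\<lambda>q. if q \<in> A then x q else 0) = bform A M x x"
proof -
  have fA: "finite A" using assms finite_subset by blast
  let ?x = "\<lambda>q. if q \<in> A then x q else 0"
  have "(\<Sum>s\<in>S. \<Sum>t\<in>S. ?x s * ?x t * bf_coeff M s t) = (\<Sum>s\<in>A. \<Sum>t\<in>A. x s * x t * bf_coeff M s t)"
  proof (rule sum.mono_neutral_cong_right[OF assms(2) assms(1)])
    show "\<forall>i\<in>S - A. (\<Sum>t\<in>S. ?x i * ?x t * bf_coeff M i t) = 0" by simp
  next
    fix s assume s: "s \<in> A"
    show "(\<Sum>t\<in>S. ?x s * ?x t * bf_coeff M s t) = (\<Sum>t\<in>A. x s * x t * bf_coeff M s t)"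
      by (rule sum.mono_neutral_cong_right[OF assms(2) assms(1)]) (use s in auto)
  qed
  then show ?thesis by (simp add: bform_def)
qed

locale cox =
  fixes S :: "'a set" and M :: "'a \<Rightarrow> 'a \<Rightarrow> enat"
  assumes cm: "coxeter_matrix S M" and fin: "finite S" and psd: "\<And>x. bform S M x x \<ge> 0"
begin

abbreviation B where "B \<equiv> bform S M"

lemma bf_sym: "s \<in> S \<Longrightarrow> t \<in> S \<Longrightarrow> bf_coeff M s t = bf_coeff M t s"
  using cm unfolding coxeter_matrix_def bf_coeff_def by (cases "s = t") auto

lemma B_sym: "B u v = B v u"
  unfolding bform_def
  by (subst sum.swap) (auto intro!: sum.cong simp: bf_sym mult_ac)

lemma B_aa: "s \<in> S \<Longrightarrow> B (simple_root s) (simple_root s) = 2"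
  using cm fin by (simp add: bform_ss bf_one coxeter_matrix_def)

lemma B_diff2: "B u (v - w) = B u v - B u w"
  using linear_diff[OF lin2] by blast
lemma B_diff1: "B (u - v) w = B u w - B v w"
  using linear_diff[OF lin1] by blast

lemma refl_pres: assumes "s \<in> S" shows "B (refl S M s u) (refl S M s v) = B u v"
proof -
  let ?a = "simple_root s"
  have "B (refl S M s u) (refl S M s v) = B u v - B u ?a * B v ?a - B u ?a * B ?a v + B u ?a * B v ?a * B ?a ?a"
    unfolding refl_eq by (simp add: B_diff1 B_diff2 bform_scale1 bform_scale2 algebra_simps)
  also have "\<dots> = B u v" using B_aa[OF assms] B_sym[of ?a v] by simp
  finally show ?thesis .
qed

lemma weyl_pres: "w \<in> weyl S M \<Longrightarrow> B (w u) (w v) = B u v"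
  by (induction w rule: weyl.induct) (auto simp: refl_pres)

lemma weyl_span: "w \<in> weyl S M \<Longrightarrow> u \<in> span (simple_root ` S) \<Longrightarrow> w u \<in> span (simple_root ` S)"
proof (induction w arbitrary: u rule: weyl.induct)
  case weyl_id then show ?case by simp
next
  case (weyl_step w s)
  have a: "w u \<in> span (simple_root ` S)" using weyl_step by blast
  have b: "simple_root s \<in> span (simple_root ` S)" using weyl_step by (intro span_base imageI)
  show ?case unfolding comp_apply refl_eq by (intro span_diff span_scale a b)
qed

lemma roots_span: "\<beta> \<in> roots S M \<Longrightarrow> \<beta> \<in> span (simple_root ` S)"
  unfolding roots_def by clarify (rule weyl_span, assumption, rule span_base, simp)

lemma root_norm: "\<beta> \<in> roots S M \<Longrightarrow> B \<beta> \<beta> = 2"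
  unfolding roots_def by (auto simp: weyl_pres B_aa)

lemma rad: assumes "B x x \<le> 0" shows "B x y = 0"
proof (rule ccontr)
  assume ne: "B x y \<noteq> 0"
  have xx: "B x x = 0" using psd[of x] assms by simp
  define b where "b = B x y"
  define c where "c = B y y"
  have c0: "c \<ge> 0" using psd c_def by simp
  define t where "t = - b / (c + 1)"
  have "B (x + t *\<^sub>R y) (x + t *\<^sub>R y) = 2 * t * b + t * t * c"
    by (simp add: bform_add1 bform_add2 bform_scale1 bform_scale2 xx b_def c_def B_sym[of y x] algebra_simps)
  also have "\<dots> < 0"
  proof -
    have c1: "c + 1 > 0" using c0 by simp
    have tc: "t * (c + 1) = - b" using c1 by (simp add: t_def)
    have bb: "b * b > 0" using ne b_def not_real_square_gt_zero by metis
    have "(c + 1) * (c + 1) * (2 * t * b + t * t * c) = 2 * (t * (c + 1)) * b * (c + 1) + (t * (c + 1)) * (t * (c + 1)) * c"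
      by (simp add: algebra_simps)
    also have "\<dots> = - (b * b) * (c + 2)" unfolding tc by (simp add: algebra_simps)
    also have "\<dots> < 0" using bb c0 by (simp add: mult_pos_pos)
    finally have "(c + 1) * (c + 1) * (2 * t * b + t * t * c) < 0" .
    moreover have "(c + 1) * (c + 1) > 0" using c1 by simp
    ultimately show ?thesis by (simp add: mult_less_0_iff)
  qed
  finally show False using psd[of "x + t *\<^sub>R y"] by simp
qed


lemma hat_data:
  assumes "\<beta> \<noteq> \<gamma>" "hatM S M \<beta> \<gamma> \<noteq> \<infinity>"
  shows "\<exists>w s t. w \<in> weyl S M \<and> s \<in> S \<and> t \<in> S \<and> \<beta> = w (simple_root s) \<and>
           \<gamma> = w (simple_root t) \<and> M s t \<noteq> \<infinity> \<and> hatM S M \<beta> \<gamma> = M s t"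
proof -
  have ex: "\<exists>w s t. w \<in> weyl S M \<and> s \<in> S \<and> t \<in> S \<and> \<beta> = w (simple_root s) \<and>
                      \<gamma> = w (simple_root t) \<and> M s t \<noteq> \<infinity>"
  proof (rule ccontr)
    assume nex: "\<not> ?thesis"
    have "hatM S M \<beta> \<gamma> = \<infinity>" unfolding hatM_def by (simp only: if_not_P[OF nex] if_not_P[OF assms(1)])
    then show False using assms(2) by simp
  qed
  define P where "P = (\<lambda>p. \<exists>w. w \<in> weyl S M \<and> fst p \<in> S \<and> snd p \<in> S \<and>
                      \<beta> = w (simple_root (fst p)) \<and> \<gamma> = w (simple_root (snd p)) \<and>
                      M (fst p) (snd p) \<noteq> \<infinity>)"
  have "\<exists>p. P p" using ex unfolding P_def by force
  then have Pp: "P (SOME p. P p)" by (rule someI_ex)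
  have h: "hatM S M \<beta> \<gamma> = M (fst (SOME p. P p)) (snd (SOME p. P p))"
    using assms(1) ex unfolding hatM_def P_def Let_def by simp
  show ?thesis using Pp h unfolding P_def by blast
qed

lemma hat_bf:
  assumes "\<beta> \<in> roots S M" "\<gamma> \<in> roots S M" "hatM S M \<beta> \<gamma> \<noteq> \<infinity>"
  shows "bf_coeff (hatM S M) \<beta> \<gamma> = B \<beta> \<gamma>"
proof (cases "\<beta> = \<gamma>")
  case True
  then show ?thesis using root_norm[OF assms(1)] by (simp add: hatM_def bf_coeff_def one_enat_def)
next
  case False
  then obtain w s t where d: "w \<in> weyl S M" "s \<in> S" "t \<in> S" "\<beta> = w (simple_root s)"
    "\<gamma> = w (simple_root t)" "hatM S M \<beta> \<gamma> = M s t"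
    using hat_data assms(3) by blast
  have "bf_coeff (hatM S M) \<beta> \<gamma> = bf_coeff M s t" using d(6) by (simp add: bf_coeff_def)
  also have "\<dots> = B (simple_root s) (simple_root t)" using bform_ss[OF fin d(2,3)] by simp
  also have "\<dots> = B \<beta> \<gamma>" using d by (simp add: weyl_pres)
  finally show ?thesis .
qed

lemma hat_neg:
  assumes "\<beta> \<in> roots S M" "\<gamma> \<in> roots S M" "hatM S M \<beta> \<gamma> \<noteq> \<infinity>" "\<beta> \<noteq> \<gamma>"
  shows "B \<beta> \<gamma> \<le> 0"
proof -
  obtain w s t where d: "w \<in> weyl S M" "s \<in> S" "t \<in> S" "\<beta> = w (simple_root s)"
    "\<gamma> = w (simple_root t)" "M s t \<noteq> \<infinity>"
    using hat_data assms(3,4) by blast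
  have st: "s \<noteq> t" using d assms(4) by blast
  then have "M s t \<ge> 2" using cm d(2,3) unfolding coxeter_matrix_def by blast
  moreover obtain n where n: "M s t = enat n" using d(6) by (cases "M s t") auto
  ultimately have n2: "real n \<ge> 2" by (simp add: numeral_eq_enat)
  have "pi * 2 \<le> pi * real n" using n2 by (intro mult_left_mono) auto
  then have "pi / real n \<le> pi / 2" using n2 by (simp add: divide_le_eq)
  moreover have "0 \<le> pi / real n" using n2 by simp
  ultimately have "cos (pi / real n) \<ge> 0" by (intro cos_ge_zero) (auto intro: order_trans[of _ 0])
  then have "bf_coeff M s t \<le> 0" using n by (simp add: bf_coeff_def)
  then show ?thesis using bform_ss[OF fin d(2,3)] d by (simp add: weyl_pres)
qed


lemma B_zero2: "B u 0 = 0" by (simp add: bform_def)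
lemma B_zero1: "B 0 u = 0" by (simp add: bform_def)

lemma B_sum2: "B u (\<Sum>i\<in>I. c i *\<^sub>R x i) = (\<Sum>i\<in>I. c i * B u (x i))"
  by (induction I rule: infinite_finite_induct) (simp_all add: bform_add2 bform_scale2 B_zero2 del: plus_fun_apply zero_fun_apply scaleR_fun_apply)

lemma B_sum1: "B (\<Sum>i\<in>I. c i *\<^sub>R x i) u = (\<Sum>i\<in>I. c i * B (x i) u)"
  by (induction I rule: infinite_finite_induct) (simp_all add: bform_add1 bform_scale1 B_zero1 del: plus_fun_apply zero_fun_apply scaleR_fun_apply)

lemma obtuse_nonpos:
  assumes C: "C \<subseteq> roots S M" and nb: "\<forall>\<beta>\<in>C. \<forall>\<gamma>\<in>C. hatM S M \<beta> \<gamma> \<noteq> \<infinity>"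
    and pos: "\<forall>\<beta>\<in>C. \<sigma> * B \<beta> a > 0"
    and Z: "finite Z" "Z \<subseteq> C" and sum0: "(\<Sum>v\<in>Z. u v *\<^sub>R v) = 0"
  shows "\<forall>v\<in>Z. u v \<le> 0"
proof (rule ccontr)
  assume neg: "\<not> (\<forall>v\<in>Z. u v \<le> 0)"
  define P where "P = {v\<in>Z. u v > 0}"
  define N where "N = Z - P"
  have PN: "P \<subseteq> Z" "finite P" "finite N" "P \<noteq> {}" using Z neg by (auto simp: P_def N_def)
  define w where "w = (\<Sum>v\<in>P. u v *\<^sub>R v)"
  have "(\<Sum>v\<in>Z. u v *\<^sub>R v) = w + (\<Sum>v\<in>N. u v *\<^sub>R v)"
    unfolding w_def N_def using PN Z by (simp add: sum.subset_diff[of P Z])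
  then have wN: "w = (\<Sum>v\<in>N. (- u v) *\<^sub>R v)" using sum0
    by (simp add: sum_negf eq_neg_iff_add_eq_0)
  have "B w w = (\<Sum>q\<in>N. (- u q) * B w q)" by (subst (2) wN) (rule B_sum2)
  also have "\<dots> = (\<Sum>q\<in>N. (- u q) * (\<Sum>p\<in>P. u p * B p q))" unfolding w_def by (simp add: B_sum1)
  also have "\<dots> \<le> 0"
  proof (rule sum_nonpos)
    fix q assume q: "q \<in> N"
    have "(\<Sum>p\<in>P. u p * B p q) \<le> 0"
    proof (rule sum_nonpos)
      fix p assume p: "p \<in> P"
      have "p \<noteq> q" using p q by (auto simp: N_def)
      have pC: "p \<in> C" "q \<in> C" using p q Z by (auto simp: N_def P_def)
      then have "B p q \<le> 0" using hat_neg[of p q] \<open>p \<noteq> q\<close> C nb by blast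
      moreover have "u p > 0" using p by (simp add: P_def)
      ultimately show "u p * B p q \<le> 0" by (simp add: mult_nonneg_nonpos)
    qed
    moreover have "- u q \<ge> 0" using q by (auto simp: N_def P_def)
    ultimately show "(- u q) * (\<Sum>p\<in>P. u p * B p q) \<le> 0" by (metis mult_nonneg_nonpos)
  qed
  finally have "B w a = 0" by (rule rad)
  moreover have "\<sigma> * B w a = (\<Sum>p\<in>P. u p * (\<sigma> * B p a))"
    unfolding w_def by (simp add: B_sum1 sum_distrib_left mult_ac)
  moreover have "(\<Sum>p\<in>P. u p * (\<sigma> * B p a)) > 0"
    using PN pos Z by (intro sum_pos) (auto simp: P_def)
  ultimately show False by simp
qed

lemma obtuse_indep:
  assumes C: "C \<subseteq> roots S M" and nb: "\<forall>\<beta>\<in>C. \<forall>\<gamma>\<in>C. hatM S M \<beta> \<gamma> \<noteq> \<infinity>"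
    and pos: "\<forall>\<beta>\<in>C. \<sigma> * B \<beta> a > 0"
  shows "independent C"
  unfolding independent_explicit_finite_subsets
proof (intro allI impI ballI)
  fix Z u v assume Z: "Z \<subseteq> C" "finite Z" and s0: "(\<Sum>v\<in>Z. u v *\<^sub>R v) = 0" and v: "v \<in> Z"
  have "u v \<le> 0" using obtuse_nonpos[OF C nb pos Z(2,1) s0] v by blast
  moreover have "(\<Sum>v\<in>Z. (- u v) *\<^sub>R v) = 0" using s0 by (simp add: sum_negf)
  then have "- u v \<le> 0" using obtuse_nonpos[OF C nb pos Z(2,1), of "\<lambda>v. - u v"] v by blast
  ultimately show "u v = 0" by simp
qed

lemma X_finite:
  assumes X: "X \<subseteq> roots S M" and nb: "\<forall>\<beta>\<in>X. \<forall>\<gamma>\<in>X. hatM S M \<beta> \<gamma> \<noteq> \<infinity>"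
  shows "finite X"
proof -
  define C where "C = (\<lambda>s \<sigma>. {\<beta>\<in>X. \<sigma> * B \<beta> (simple_root s) > (0::real)})"
  have cover: "X \<subseteq> (\<Union>s\<in>S. \<Union>\<sigma>\<in>{1, -1}. C s \<sigma>)"
  proof
    fix \<beta> assume b: "\<beta> \<in> X"
    have "\<exists>s\<in>S. B \<beta> (simple_root s) \<noteq> 0"
    proof (rule ccontr)
      assume "\<not> ?thesis"
      then have "B \<beta> \<beta> = 0" using lin_span0[OF lin2[of S M \<beta>], of "simple_root ` S" \<beta>] roots_span b X by blast
      then show False using root_norm b X by auto
    qed
    then obtain s where s: "s \<in> S" "B \<beta> (simple_root s) \<noteq> 0" by blast
    show "\<beta> \<in> (\<Union>s\<in>S. \<Union>\<sigma>\<in>{1, -1}. C s \<sigma>)"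
    proof (cases "B \<beta> (simple_root s) > 0")
      case True then show ?thesis using s b by (auto simp: C_def)
    next
      case False then have "(-1) * B \<beta> (simple_root s) > 0" using s by simp
      then show ?thesis using s b by (auto simp: C_def)
    qed
  qed
  have "finite (C s \<sigma>)" for s \<sigma>
  proof -
    have "independent (C s \<sigma>)" using X nb by (intro obtuse_indep[of _ \<sigma> "simple_root s"]) (auto simp: C_def)
    moreover have "C s \<sigma> \<subseteq> span (simple_root ` S)" using X roots_span by (auto simp: C_def)
    ultimately show ?thesis using independent_span_bound[of "simple_root ` S"] fin by blast
  qed
  then show ?thesis using cover fin by (rule_tac finite_subset) auto
qed

lemma gram:
  assumes "Y \<subseteq> roots S M" "\<forall>\<beta>\<in>Y. \<forall>\<gamma>\<in>Y. hatM S M \<beta> \<gamma> \<noteq> \<infinity>"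
  shows "bform Y (hatM S M) x x = B (\<Sum>\<beta>\<in>Y. x \<beta> *\<^sub>R \<beta>) (\<Sum>\<beta>\<in>Y. x \<beta> *\<^sub>R \<beta>)"
proof -
  have "B (\<Sum>\<beta>\<in>Y. x \<beta> *\<^sub>R \<beta>) (\<Sum>\<beta>\<in>Y. x \<beta> *\<^sub>R \<beta>) = (\<Sum>\<beta>\<in>Y. x \<beta> * (\<Sum>\<gamma>\<in>Y. x \<gamma> * B \<beta> \<gamma>))"
    by (simp add: B_sum1 B_sum2 B_sym)
  also have "\<dots> = (\<Sum>\<beta>\<in>Y. \<Sum>\<gamma>\<in>Y. x \<beta> * x \<gamma> * bf_coeff (hatM S M) \<beta> \<gamma>)"
    using assms by (auto simp: sum_distrib_left hat_bf mult_ac subset_iff intro!: sum.cong)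
  finally show ?thesis by (simp add: bform_def)
qed


lemma maxsph:
  obtains T0 where "T0 \<subseteq> S" "spherical_type T0 M" "card T0 = nsph S M"
    "\<And>s. s \<in> S \<Longrightarrow> s \<notin> T0 \<Longrightarrow> \<not> spherical_type (insert s T0) M"
proof -
  define SP where "SP = {card X | X. X \<subseteq> S \<and> finite X \<and> spherical_type X M}"
  have fSP: "finite SP"
  proof (rule finite_subset[of _ "{..card S}"])
    show "SP \<subseteq> {..card S}" using fin by (auto simp: SP_def intro: card_mono)
  qed simp
  have "spherical_type {} M" by (simp add: spherical_type_def)
  then have "card {} \<in> SP" unfolding SP_def by (intro CollectI exI[of _ "{}"]) simp
  then have ne: "SP \<noteq> {}" by blast
  have "Max SP \<in> SP" using fSP ne by (rule Max_in)
  then obtain T0 where T0: "T0 \<subseteq> S" "finite T0" "spherical_type T0 M" "card T0 = nsph S M"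
    unfolding SP_def nsph_def by auto
  show ?thesis
  proof (rule that[OF T0(1,3,4)])
    fix s assume s: "s \<in> S" "s \<notin> T0"
    show "\<not> spherical_type (insert s T0) M"
    proof
      assume "spherical_type (insert s T0) M"
      then have "card (insert s T0) \<in> SP" using s T0 unfolding SP_def by blast
      then have "card (insert s T0) \<le> Max SP" using fSP by simp
      then show False using s T0 by (simp add: SP_def nsph_def)
    qed
  qed
qed

lemma key:
  assumes T0: "T0 \<subseteq> S" "spherical_type T0 M"
    "\<And>s. s \<in> S \<Longrightarrow> s \<notin> T0 \<Longrightarrow> \<not> spherical_type (insert s T0) M"
    and z: "z \<in> span (simple_root ` S)" and orth: "\<forall>t\<in>T0. B z (simple_root t) = 0"
  shows "B z z = 0"
proof -
  define R where "R = {r. \<forall>v. B r v = 0}"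
  have fT0: "finite T0" using T0 fin finite_subset by blast
  have gen: "simple_root s \<in> span (simple_root ` T0 \<union> R)" if s: "s \<in> S" for s
  proof (cases "s \<in> T0")
    case True then show ?thesis by (intro span_base) auto
  next
    case False
    have "\<not> spherical_type (insert s T0) M" using T0(3) s False by blast
    then obtain x where x: "\<exists>q\<in>insert s T0. x q \<noteq> 0" "\<not> bform (insert s T0) M x x > 0"
      using fT0 unfolding spherical_type_def by auto
    define x' where "x' = (\<lambda>q. if q \<in> insert s T0 then x q else 0)"
    have "B x' x' = bform (insert s T0) M x x" unfolding x'_def
      using T0(1) s fin by (intro bform_restrict) auto
    then have "B x' x' \<le> 0" using x(2) by simp
    then have x'R: "x' \<in> R" unfolding R_def using rad by blast
    have xs: "x s \<noteq> 0"
    proof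
      assume xs0: "x s = 0"
      have "x' = (\<lambda>q. if q \<in> T0 then x q else 0)" using xs0 by (auto simp: x'_def)
      then have "B x' x' = bform T0 M x x" using T0(1) fin by (simp add: bform_restrict)
      moreover have "\<exists>q\<in>T0. x q \<noteq> 0" using x(1) xs0 by auto
      ultimately have "B x' x' > 0" using T0(2) unfolding spherical_type_def by simp
      then show False using \<open>B x' x' \<le> 0\<close> by simp
    qed
    define y where "y = (\<Sum>t\<in>T0. x t *\<^sub>R simple_root t)"
    have yq: "y q = (if q \<in> T0 then x q else 0)" for q
      unfolding y_def using fT0 by (simp add: sum_fun_apply simple_root_def if_distrib sum.delta cong: if_cong)
    have "x' = x s *\<^sub>R simple_root s + y"
    proof
      fix q show "x' q = (x s *\<^sub>R simple_root s + y) q"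
        using False by (auto simp: x'_def yq simple_root_def)
    qed
    then have "simple_root s = (1 / x s) *\<^sub>R (x' - y)" using xs by (simp add: algebra_simps)
    moreover have "x' - y \<in> span (simple_root ` T0 \<union> R)"
      unfolding y_def using x'R by (intro span_diff span_sum span_scale span_base) auto
    ultimately show ?thesis by (metis span_scale)
  qed
  have "span (simple_root ` S) \<subseteq> span (simple_root ` T0 \<union> R)"
    using gen by (intro span_minimal) (auto intro: subspace_span)
  then have zz: "z \<in> span (simple_root ` T0 \<union> R)" using z by blast
  show ?thesis
  proof (rule lin_span0[OF lin2 _ zz])
    fix a assume "a \<in> simple_root ` T0 \<union> R"
    then show "B z a = 0" using orth B_sym unfolding R_def by auto
  qed
qed

lemma nsph_bound:
  assumes X: "X \<subseteq> roots S M" and nb: "\<forall>\<beta>\<in>X. \<forall>\<gamma>\<in>X. hatM S M \<beta> \<gamma> \<noteq> \<infinity>"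
    and Y: "Y \<subseteq> X" "spherical_type Y (hatM S M)"
  shows "card Y \<le> nsph S M"
proof -
  obtain T0 where T0: "T0 \<subseteq> S" "spherical_type T0 M" "card T0 = nsph S M"
    "\<And>s. s \<in> S \<Longrightarrow> s \<notin> T0 \<Longrightarrow> \<not> spherical_type (insert s T0) M"
    using maxsph by blast
  have fT0: "finite T0" using T0 fin finite_subset by blast
  have fY: "finite Y" using Y unfolding spherical_type_def by blast
  define f where "f = (\<lambda>v q. if q \<in> T0 then B v (simple_root q) else 0)"
  have "card Y \<le> card (simple_root ` T0)"
  proof (rule card_le_span[of Y _ f])
    show "f ` Y \<subseteq> span (simple_root ` T0)"
      using fT0 by (auto simp: f_def intro!: supp_span)
  next
    fix c assume s0: "(\<Sum>y\<in>Y. c y *\<^sub>R f y) = 0"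
    define z where "z = (\<Sum>y\<in>Y. c y *\<^sub>R y)"
    have orth: "\<forall>t\<in>T0. B z (simple_root t) = 0"
    proof
      fix t assume t: "t \<in> T0"
      have "B z (simple_root t) = (\<Sum>y\<in>Y. c y * B y (simple_root t))" unfolding z_def by (rule B_sum1)
      also have "\<dots> = (\<Sum>y\<in>Y. c y *\<^sub>R f y) t" using t by (simp add: sum_fun_apply f_def)
      finally show "B z (simple_root t) = 0" using s0 by simp
    qed
    have zs: "z \<in> span (simple_root ` S)" unfolding z_def
      using Y X roots_span by (intro span_sum span_scale) auto
    have "B z z = 0" using key[OF T0(1,2) T0(4) zs orth] .
    moreover have nbY: "\<forall>\<beta>\<in>Y. \<forall>\<gamma>\<in>Y. hatM S M \<beta> \<gamma> \<noteq> \<infinity>" using nb Y(1) by blast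
    moreover have "bform Y (hatM S M) c c = B z z" unfolding z_def
      using Y X by (intro gram nbY) auto
    ultimately show "\<forall>y\<in>Y. c y = 0" using Y(2) unfolding spherical_type_def by force
  qed (use fY fT0 in auto)
  also have "\<dots> \<le> card T0" by (rule card_image_le[OF fT0])
  finally show ?thesis using T0(3) by simp
qed

end


theorem theorem4p1:
  fixes S :: "'a set" and M :: "'a \<Rightarrow> 'a \<Rightarrow> enat" and X :: "('a \<Rightarrow> real) set"
  assumes "coxeter_matrix S M"
    and "countable S"
    and "spherical_type S M \<or> affine_type S M"
    and "X \<subseteq> roots S M"
    and "\<forall>\<beta>\<in>X. \<forall>\<gamma>\<in>X. hatM S M \<beta> \<gamma> \<noteq> \<infinity>"
  shows "finite X \<and>
         (spherical_type X (hatM S M) \<or> affine_type X (hatM S M)) \<and>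
         nsph X (hatM S M) \<le> nsph S M"
proof -
  have finS: "finite S" using assms(3) unfolding spherical_type_def affine_type_def by blast
  have psd: "bform S M x x \<ge> 0" for x
  proof (cases "spherical_type S M")
    case True
    show ?thesis
    proof (cases "\<exists>s\<in>S. x s \<noteq> 0")
      case True
      then show ?thesis using \<open>spherical_type S M\<close> unfolding spherical_type_def
        by (simp add: less_imp_le)
    next
      case False
      then show ?thesis by (simp add: bform_def)
    qed
  next
    case False
    then show ?thesis using assms(3) unfolding affine_type_def by blast
  qed
  interpret cox S M using assms(1) finS psd by unfold_locales auto
  have fX: "finite X" using X_finite assms(4,5) by blast
  have ty: "spherical_type X (hatM S M) \<or> affine_type X (hatM S M)"
  proof -
    have "bform X (hatM S M) x x \<ge> 0" for x using gram[OF assms(4,5)] psd by simp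
    then show ?thesis using fX unfolding spherical_type_def affine_type_def by blast
  qed
  have "nsph X (hatM S M) \<le> nsph S M"
    unfolding nsph_def
  proof (rule Max.boundedI)
    show "finite {card Y |Y. Y \<subseteq> X \<and> finite Y \<and> spherical_type Y (hatM S M)}"
      by (rule finite_subset[of _ "{..card X}"]) (auto intro: card_mono fX)
  next
    have "spherical_type {} (hatM S M)" by (simp add: spherical_type_def)
    then show "{card Y |Y. Y \<subseteq> X \<and> finite Y \<and> spherical_type Y (hatM S M)} \<noteq> {}" by blast
  next
    fix a assume "a \<in> {card Y |Y. Y \<subseteq> X \<and> finite Y \<and> spherical_type Y (hatM S M)}"
    then obtain Y where "a = card Y" "Y \<subseteq> X" "spherical_type Y (hatM S M)" by blast
    then show "a \<le> Max {card X |X. X \<subseteq> S \<and> finite X \<and> spherical_type X M}"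
      using nsph_bound[OF assms(4,5)] unfolding nsph_def by blast
  qed
  then show ?thesis using fX ty by blast
qed

end
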